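(* Consider an unlabeled tabletop rearrangement instance whose unlabeled dependency graph is the dependency grid $\mathcal{D}(m,2m)$, and any moment during the execution of a valid plan with external buffers. For a column index $i$ with $1\le i<m$, if $f_i+f_{i+1}\notin\{0,2m\}$, then $c_i+c_{i+1}\ge 1$.
   Context: An unlabeled tabletop rearrangement instance has congruent interchangeable objects, a feasible start arrangement and a feasible goal arrangement (no two placed footprints with intersecting interiors). Its unlabeled dependency graph is bipartite with a start vertex per start pose and a goal vertex per goal pose, adjacent iff footprints at those poses overlap. In a valid plan with external buffers each object is picked from its start pose exactly once and placed either at an unoccupied goal pose or into an external buffer (later moved from the buffer to an unoccupied goal pose); an object may be placed at a goal pose only if it overlaps no object currently in the workspace, so a goal vertex can be occupied only after the objects at all adjacent start vertices have been picked. The dependency grid $\mathcal{D}(w,h)$ has vertices $v_{x,y}$, $1\le x\le w$ (column), $1\le y\le h$ (row), with $v_{x,y}$, $v_{x',y'}$ adjacent iff $|x-x'|+|y-y'|=1$; $v_{x,y}$ is a start vertex if $x+y$ is even and a goal vertex otherwise. In $\mathcal{D}(m,2m)$ the vertex pair $p_{i,j}$ ($1\le i,j\le m$) is $\{v_{i,2j-1},v_{i,2j}\}$; it contains one start and one goal vertex. At a given moment, a goal vertex is filled if an object is placed at the corresponding goal pose; a start vertex is cleared if the object originally at it has been picked but the goal vertex in the same vertex pair is not filled. For column $i$, $f_i$ is the number of filled goal vertices and $c_i$ the number of cleared start vertices in column $i$. *)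

theory Defs
  imports Main
begin

type_synonym vtx = "nat \<times> nat"   (* (x, y) = (column, row) *)

definition in_grid :: "nat \<Rightarrow> vtx \<Rightarrow> bool" where
  "in_grid m v \<longleftrightarrow> 1 \<le> fst v \<and> fst v \<le> m \<and> 1 \<le> snd v \<and> snd v \<le> 2 * m"

definition start_v :: "nat \<Rightarrow> vtx \<Rightarrow> bool" where
  "start_v m v \<longleftrightarrow> in_grid m v \<and> even (fst v + snd v)"

definition goal_v :: "nat \<Rightarrow> vtx \<Rightarrow> bool" where
  "goal_v m v \<longleftrightarrow> in_grid m v \<and> odd (fst v + snd v)"

definition adj :: "vtx \<Rightarrow> vtx \<Rightarrow> bool" where
  "adj v w \<longleftrightarrow> \<bar>int (fst v) - int (fst w)\<bar> + \<bar>int (snd v) - int (snd w)\<bar> = 1"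

text \<open>Actions of a plan with external buffers (objects are unlabeled):
  pick the object at start vertex s and place it at goal vertex g;
  pick the object at start vertex s and put it into the buffer;
  move an object from the buffer to goal vertex g.\<close>
datatype action = ToGoal vtx vtx | ToBuffer vtx | FromBuffer vtx

text \<open>State: (picked start vertices, filled goal vertices, number of objects in the buffer).\<close>
type_synonym state = "vtx set \<times> vtx set \<times> nat"

fun step :: "nat \<Rightarrow> action \<Rightarrow> state \<Rightarrow> state option" where
  "step m (ToGoal s g) (P, F, b) =
     (if start_v m s \<and> s \<notin> P \<and> goal_v m g \<and> g \<notin> F
         \<and> (\<forall>t. start_v m t \<and> adj t g \<longrightarrow> t \<in> insert s P)
      then Some (insert s P, insert g F, b) else None)"
| "step m (ToBuffer s) (P, F, b) =
     (if start_v m s \<and> s \<notin> P then Some (insert s P, F, Suc b) else None)"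
| "step m (FromBuffer g) (P, F, b) =
     (if 0 < b \<and> goal_v m g \<and> g \<notin> F
         \<and> (\<forall>t. start_v m t \<and> adj t g \<longrightarrow> t \<in> P)
      then Some (P, insert g F, b - 1) else None)"

fun exec_from :: "nat \<Rightarrow> state \<Rightarrow> action list \<Rightarrow> state option" where
  "exec_from m st [] = Some st"
| "exec_from m st (a # as) =
     (case step m a st of None \<Rightarrow> None | Some st' \<Rightarrow> exec_from m st' as)"

definition init_state :: state where
  "init_state = ({}, {}, 0)"

definition valid_plan :: "nat \<Rightarrow> action list \<Rightarrow> bool" where
  "valid_plan m acts \<longleftrightarrow>
     exec_from m init_state acts = Some ({v. start_v m v}, {v. goal_v m v}, 0)"

text \<open>Partner of a vertex in its vertex pair p_{i,j} = {v_{i,2j-1}, v_{i,2j}}.\<close>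
definition partner :: "vtx \<Rightarrow> vtx" where
  "partner v = (if odd (snd v) then (fst v, snd v + 1) else (fst v, snd v - 1))"

definition filled_count :: "nat \<Rightarrow> vtx set \<Rightarrow> nat \<Rightarrow> nat" where
  "filled_count m F i = card {v. goal_v m v \<and> fst v = i \<and> v \<in> F}"

definition cleared_count :: "nat \<Rightarrow> vtx set \<Rightarrow> vtx set \<Rightarrow> nat \<Rightarrow> nat" where
  "cleared_count m P F i = card {v. start_v m v \<and> fst v = i \<and> v \<in> P \<and> partner v \<notin> F}"

end

theory Submission
  imports Defs
begin

definition invr :: "nat \<Rightarrow> state \<Rightarrow> bool" where
  "invr m st = (\<forall>g\<in>fst (snd st). \<forall>t. start_v m t \<and> adj t g \<longrightarrow> t \<in> fst st)"

lemma step_inv: "step m a st = Some st' \<Longrightarrow> invr m st \<Longrightarrow> invr m st'"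
  apply (cases st; cases a)
  apply (simp_all add: invr_def split: if_splits prod.splits)
  apply (auto simp: invr_def split: if_splits)
  apply blast+
  done

lemma exec_inv: "exec_from m st as = Some st' \<Longrightarrow> invr m st \<Longrightarrow> invr m st'"
proof (induction as arbitrary: st)
  case Nil then show ?case by simp
next
  case (Cons a as)
  then show ?case using step_inv by (auto split: option.splits)
qed

definition gl :: "nat \<Rightarrow> nat \<Rightarrow> vtx" where
  "gl x j = (x, if odd x then 2*j else 2*j - 1)"

lemma col_goals:
  assumes "1 \<le> x" "x \<le> m"
  shows "{v. goal_v m v \<and> fst v = x} = gl x ` {1..m}"
proof
  show "{v. goal_v m v \<and> fst v = x} \<subseteq> gl x ` {1..m}"
  proof
    fix v assume "v \<in> {v. goal_v m v \<and> fst v = x}"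
    then obtain y where v: "v = (x,y)" "1 \<le> y" "y \<le> 2*m" "odd (x+y)"
      by (cases v) (auto simp: goal_v_def in_grid_def)
    have "gl x ((y+1) div 2) = v" "(y+1) div 2 \<in> {1..m}"
      using v by (auto simp: gl_def) presburger+
    then show "v \<in> gl x ` {1..m}" by (metis imageI)
  qed
  show "gl x ` {1..m} \<subseteq> {v. goal_v m v \<and> fst v = x}"
  proof
    fix v assume "v \<in> gl x ` {1..m}"
    then obtain j where j: "1 \<le> j" "j \<le> m" "v = gl x j" by auto
    have "odd (x + snd (gl x j))" 
    proof (cases "odd x")
      case True then show ?thesis by (simp add: gl_def)
    next
      case False then show ?thesis using j by (simp add: gl_def)
    qed
    then show "v \<in> {v. goal_v m v \<and> fst v = x}"
      using assms j by (auto simp: gl_def goal_v_def in_grid_def)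
  qed
qed

lemma gl_inj: "inj_on (gl x) {1..m}"
  by (auto simp: inj_on_def gl_def split: if_splits)

lemma card_col: "1 \<le> x \<Longrightarrow> x \<le> m \<Longrightarrow> card {v. goal_v m v \<and> fst v = x} = m"
  using col_goals gl_inj card_image by fastforce

locale prp =
  fixes m u d :: nat and P F :: "vtx set"
  assumes I: "\<forall>g\<in>F. \<forall>t. start_v m t \<and> adj t g \<longrightarrow> t \<in> P"
    and C: "\<forall>v. start_v m v \<and> (fst v = u \<or> fst v = d) \<and> v \<in> P \<longrightarrow> partner v \<in> F"
    and ou: "odd u" and ed: "even d" and ud: "u = Suc d \<or> d = Suc u"
    and ur: "1 \<le> u" "u \<le> m" and dr: "1 \<le> d" "d \<le> m"
begin

lemma arith1: "1 \<le> j \<Longrightarrow> j \<le> m \<Longrightarrow> 1 \<le> 2*j - 1 \<and> 2*j-1 \<le> 2*m \<and> 2*j-1+1 = 2*j \<and> odd (2*j-1)"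
  by presburger
lemma arith2: "1 < j \<Longrightarrow> j \<le> m \<Longrightarrow> 1 \<le> 2*j - 2 \<and> 2*j-2 \<le> 2*m \<and> 2*(j-1)-1 = 2*j-3 \<and> even (2*j-2) \<and> 2*j-2-1 = 2*j-3"
  by presburger

lemma key: "start_v m t \<Longrightarrow> adj t g \<Longrightarrow> g \<in> F \<Longrightarrow> fst t = u \<or> fst t = d \<Longrightarrow> partner t \<in> F"
  using I C by blast

lemma a1: "1 \<le> j \<Longrightarrow> j \<le> m \<Longrightarrow> gl u j \<in> F \<Longrightarrow> gl d j \<in> F"
  using key[of "(d, 2*j)" "gl u j"] ou ed ud ur dr
  by (auto simp: gl_def start_v_def in_grid_def adj_def partner_def)

lemma a2: "1 \<le> j \<Longrightarrow> j \<le> m \<Longrightarrow> gl d j \<in> F \<Longrightarrow> gl u j \<in> F"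
  using arith1[of j] key[of "(u, 2*j-1)" "gl d j"] ou ed ud ur dr
  by (auto simp: gl_def start_v_def in_grid_def adj_def partner_def)

lemma b1: "1 \<le> j \<Longrightarrow> j < m \<Longrightarrow> gl u j \<in> F \<Longrightarrow> gl u (Suc j) \<in> F"
  using key[of "(u, 2*j+1)" "gl u j"] ou ed ud ur dr
  by (auto simp: gl_def start_v_def in_grid_def adj_def partner_def)

lemma c1: "1 < j \<Longrightarrow> j \<le> m \<Longrightarrow> gl d j \<in> F \<Longrightarrow> gl d (j - 1) \<in> F"
  using arith2[of j] key[of "(d, 2*j-2)" "gl d j"] ou ed ud ur dr
  by (auto simp: gl_def start_v_def in_grid_def adj_def partner_def)

lemma up: "gl u j \<in> F \<Longrightarrow> 1 \<le> j \<Longrightarrow> j \<le> k \<Longrightarrow> k \<le> m \<Longrightarrow> gl u k \<in> F"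
proof (induction k)
  case 0 then show ?case by simp
next
  case (Suc k)
  show ?case
  proof (cases "j = Suc k")
    case True then show ?thesis using Suc by simp
  next
    case False
    then have "gl u k \<in> F" using Suc by simp
    then show ?thesis using b1[of k] Suc False by simp
  qed
qed

lemma down: "gl d (k + n) \<in> F \<Longrightarrow> 1 \<le> k \<Longrightarrow> k + n \<le> m \<Longrightarrow> gl d k \<in> F"
proof (induction n)
  case 0 then show ?case by simp
next
  case (Suc n)
  have "gl d (k + n) \<in> F" using c1[of "k + Suc n"] Suc.prems by simp
  then show ?case using Suc by simp
qed

lemma down': "gl d j \<in> F \<Longrightarrow> 1 \<le> k \<Longrightarrow> k \<le> j \<Longrightarrow> j \<le> m \<Longrightarrow> gl d k \<in> F"
  using down[of k "j - k"] by simp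

lemma allf:
  assumes "x = u \<or> x = d" "1 \<le> j" "j \<le> m" "gl x j \<in> F" "1 \<le> k" "k \<le> m"
  shows "gl u k \<in> F \<and> gl d k \<in> F"
proof -
  have m1: "1 \<le> m" using assms by simp
  have "gl u 1 \<in> F \<and> gl d m \<in> F"
  proof (cases "x = u")
    case True
    have "gl u m \<in> F" using up[of j m] assms True by simp
    then have "gl d m \<in> F" using a1[of m] m1 by simp
    moreover have "gl d 1 \<in> F" using down'[of m 1] m1 \<open>gl d m \<in> F\<close> by simp
    then have "gl u 1 \<in> F" using a2[of 1] m1 by simp
    ultimately show ?thesis by simp
  next
    case False
    then have x: "x = d" using assms by simp
    have "gl d 1 \<in> F" using down'[of j 1] assms x by simp
    then have "gl u 1 \<in> F" using a2[of 1] m1 by simp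
    moreover have "gl u m \<in> F" using up[of 1 m] m1 \<open>gl u 1 \<in> F\<close> by simp
    then have "gl d m \<in> F" using a1[of m] m1 by simp
    ultimately show ?thesis by simp
  qed
  then show ?thesis using up[of 1 k] down'[of m k] assms by simp
qed

end

theorem lemma3:
  fixes m i k :: nat and acts :: "action list" and P F :: "vtx set" and b :: nat
  assumes "valid_plan m acts"
    and "k \<le> length acts"
    and "exec_from m init_state (take k acts) = Some (P, F, b)"
    and "1 \<le> i" and "i < m"
    and "filled_count m F i + filled_count m F (Suc i) \<notin> {0, 2 * m}"
  shows "cleared_count m P F i + cleared_count m P F (Suc i) \<ge> 1"
proof (rule ccontr)
  assume neg: "\<not> ?thesis"
  have I: "\<forall>g\<in>F. \<forall>t. start_v m t \<and> adj t g \<longrightarrow> t \<in> P"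
    using exec_inv[OF assms(3)] by (simp add: invr_def init_state_def)
  have fin: "finite {v. start_v m v \<and> fst v = x \<and> v \<in> P \<and> partner v \<notin> F}" for x
  proof (rule finite_subset)
    show "{v. start_v m v \<and> fst v = x \<and> v \<in> P \<and> partner v \<notin> F} \<subseteq> {1..m} \<times> {1..2*m}"
      by (auto simp: start_v_def in_grid_def)
  qed simp
  have e: "{v. start_v m v \<and> fst v = x \<and> v \<in> P \<and> partner v \<notin> F} = {}" if "x = i \<or> x = Suc i" for x
  proof -
    have "card {v. start_v m v \<and> fst v = x \<and> v \<in> P \<and> partner v \<notin> F} = 0"
      using neg that by (auto simp: cleared_count_def)
    then show ?thesis using fin[of x] card_0_eq by blast
  qed
  have C: "\<forall>v. start_v m v \<and> (fst v = i \<or> fst v = Suc i) \<and> v \<in> P \<longrightarrow> partner v \<in> F"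
  proof (intro allI impI)
    fix v assume h: "start_v m v \<and> (fst v = i \<or> fst v = Suc i) \<and> v \<in> P"
    show "partner v \<in> F"
    proof (rule ccontr)
      assume "partner v \<notin> F"
      then have "v \<in> {w. start_v m w \<and> fst w = fst v \<and> w \<in> P \<and> partner w \<notin> F}" using h by simp
      then show False using e[of "fst v"] h by simp
    qed
  qed
  obtain u d where ud: "(u = i \<and> d = Suc i) \<or> (u = Suc i \<and> d = i)" "odd u" "even d"
  proof (cases "odd i")
    case True then show ?thesis using that[of i "Suc i"] by simp
  next
    case False then show ?thesis using that[of "Suc i" i] by simp
  qed
  have uds: "\<And>z. (z = u \<or> z = d) \<longleftrightarrow> (z = i \<or> z = Suc i)" using ud(1) by auto
  have C': "\<forall>v. start_v m v \<and> (fst v = u \<or> fst v = d) \<and> v \<in> P \<longrightarrow> partner v \<in> F"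
    using C uds by simp
  have r: "u = Suc d \<or> d = Suc u" "1 \<le> u" "u \<le> m" "1 \<le> d" "d \<le> m"
    using ud(1) assms(4,5) by auto
  interpret prp m u d P F
    by (rule prp.intro; (rule I C' ud(2,3) r)?)
  have nz: "filled_count m F i + filled_count m F (Suc i) \<noteq> 0" using assms(6) by simp
  obtain x where x: "x = i \<or> x = Suc i" "filled_count m F x \<noteq> 0"
  proof (cases "filled_count m F i = 0")
    case True then show ?thesis using that[of "Suc i"] nz by simp
  next
    case False then show ?thesis using that[of i] by simp
  qed
  have "{v. goal_v m v \<and> fst v = x \<and> v \<in> F} \<noteq> {}"
  proof
    assume "{v. goal_v m v \<and> fst v = x \<and> v \<in> F} = {}"
    then have "filled_count m F x = 0" unfolding filled_count_def by (simp only: card.empty)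
    then show False using x(2) by simp
  qed
  then obtain v where v: "goal_v m v" "fst v = x" "v \<in> F" by blast
  have x1: "1 \<le> x" "x \<le> m" using x(1) assms(4,5) by auto
  have "v \<in> gl x ` {1..m}" using col_goals[OF x1] v by blast
  then obtain j where j: "1 \<le> j" "j \<le> m" "v = gl x j" by auto
  have xud: "x = u \<or> x = d" using x(1) uds by simp
  have full: "filled_count m F y = m" if "y = i \<or> y = Suc i" for y
  proof -
    have yud: "y = u \<or> y = d" using that uds by simp
    have y1: "1 \<le> y" "y \<le> m" using that assms(4,5) by auto
    have "{v. goal_v m v \<and> fst v = y \<and> v \<in> F} = {v. goal_v m v \<and> fst v = y}"
    proof -
      have xF: "gl x j \<in> F" using j(3) v(3) by simp
      have "gl y k \<in> F" if "k \<in> {1..m}" for k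
        using allf[OF xud j(1,2) xF, of k] that yud by auto
      then have "gl y ` {1..m} \<subseteq> F" by blast
      then show ?thesis using col_goals[OF y1] by blast
    qed
    then show ?thesis unfolding filled_count_def using card_col[OF y1] by simp
  qed
  then have "filled_count m F i + filled_count m F (Suc i) = 2 * m" by simp
  then show False using assms(6) by simp
qed

end
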